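(* Let $f:\mathbb{R}^2\to\mathbb{R}^2$ be a Topologically Anosov homeomorphism which is the time one map of a flow $(f_t)_{t\in\mathbb{R}}$ defined by a $C^1$ vector field on $\mathbb{R}^2$. Then the flow has no (non-stationary) periodic orbits and no finite connections.
   Context: A homeomorphism $f:\mathbb{R}^2\to\mathbb{R}^2$ is Topologically Anosov (TA) if: (i) there is a continuous strictly positive $\epsilon:\mathbb{R}^2\to\mathbb{R}$ such that for all $x\neq y$ there is $k\in\mathbb{Z}$ with $\|f^k(x)-f^k(y)\|>\epsilon(f^k(x))$; and (ii) for every continuous strictly positive $\epsilon$ there is a continuous strictly positive $\delta$ such that every $\delta$-pseudo-orbit is $\epsilon$-shadowed by an orbit. A $\delta$-pseudo-orbit is a sequence $(x_n)_{n\in\mathbb{Z}}$ with $\|f(x_n)-x_{n+1}\|<\delta(f(x_n))$; it is $\epsilon$-shadowed by the orbit of $x$ if $\|x_n-f^n(x)\|<\epsilon(x_n)$ for all $n$. A connection between singularities $x_1,x_2$ (not necessarily distinct) of the flow is an orbit of a point $x$ with $\alpha(x)=\{x_1\}$ and $\omega(x)=\{x_2\}$ (or vice versa); it is finite if $x_1,x_2\in\mathbb{R}^2$ (i.e. neither is the point at infinity of the extension of the flow to $\mathbb{S}^2=\mathbb{R}^2\cup\{\infty\}$). *)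

theory Defs
  imports "HOL-Analysis.Analysis"
begin

type_synonym R2 = "real ^ 2"

definition zpow :: "(R2 \<Rightarrow> R2) \<Rightarrow> int \<Rightarrow> R2 \<Rightarrow> R2" where
  "zpow f k = (if k \<ge> 0 then f ^^ nat k else (inv f) ^^ nat (- k))"

definition pos_cont :: "(R2 \<Rightarrow> real) \<Rightarrow> bool" where
  "pos_cont e \<longleftrightarrow> continuous_on UNIV e \<and> (\<forall>x. e x > 0)"

definition expansive_fun :: "(R2 \<Rightarrow> R2) \<Rightarrow> bool" where
  "expansive_fun f \<longleftrightarrow> (\<exists>e. pos_cont e \<and>
     (\<forall>x y. x \<noteq> y \<longrightarrow> (\<exists>k::int. norm (zpow f k x - zpow f k y) > e (zpow f k x))))"

definition pseudo_orbit :: "(R2 \<Rightarrow> R2) \<Rightarrow> (R2 \<Rightarrow> real) \<Rightarrow> (int \<Rightarrow> R2) \<Rightarrow> bool" where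
  "pseudo_orbit f d xs \<longleftrightarrow> (\<forall>n. norm (f (xs n) - xs (n + 1)) < d (f (xs n)))"

definition shadows :: "(R2 \<Rightarrow> R2) \<Rightarrow> (R2 \<Rightarrow> real) \<Rightarrow> (int \<Rightarrow> R2) \<Rightarrow> R2 \<Rightarrow> bool" where
  "shadows f e xs x \<longleftrightarrow> (\<forall>n. norm (xs n - zpow f n x) < e (xs n))"

definition shadowing :: "(R2 \<Rightarrow> R2) \<Rightarrow> bool" where
  "shadowing f \<longleftrightarrow> (\<forall>e. pos_cont e \<longrightarrow> (\<exists>d. pos_cont d \<and>
      (\<forall>xs. pseudo_orbit f d xs \<longrightarrow> (\<exists>x. shadows f e xs x))))"

definition topologically_anosov :: "(R2 \<Rightarrow> R2) \<Rightarrow> bool" where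
  "topologically_anosov f \<longleftrightarrow> (\<exists>g. homeomorphism UNIV UNIV f g) \<and> expansive_fun f \<and> shadowing f"

definition C1_field :: "(R2 \<Rightarrow> R2) \<Rightarrow> bool" where
  "C1_field V \<longleftrightarrow> (\<exists>V' :: R2 \<Rightarrow> R2 \<Rightarrow>\<^sub>L R2.
     (\<forall>x. (V has_derivative blinfun_apply (V' x)) (at x)) \<and> continuous_on UNIV V')"

definition is_flow_of :: "(real \<Rightarrow> R2 \<Rightarrow> R2) \<Rightarrow> (R2 \<Rightarrow> R2) \<Rightarrow> bool" where
  "is_flow_of phi V \<longleftrightarrow> (\<forall>x. phi 0 x = x) \<and> (\<forall>s t x. phi (s + t) x = phi s (phi t x)) \<and>
     (\<forall>x t. ((\<lambda>s. phi s x) has_vector_derivative V (phi t x)) (at t))"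

definition singularity :: "(R2 \<Rightarrow> R2) \<Rightarrow> R2 \<Rightarrow> bool" where
  "singularity V p \<longleftrightarrow> V p = 0"

definition periodic_orbit :: "(real \<Rightarrow> R2 \<Rightarrow> R2) \<Rightarrow> (R2 \<Rightarrow> R2) \<Rightarrow> R2 \<Rightarrow> bool" where
  "periodic_orbit phi V x \<longleftrightarrow> \<not> singularity V x \<and> (\<exists>T>0. phi T x = x)"

text \<open>Finite connection: the orbit of x has alpha-limit {x1} and omega-limit {x2} in the
  sphere R^2 \<union> {\<infinity>} with x1, x2 finite singularities, i.e. phi t x tends to x1 as t \<rightarrow> -\<infinity>
  and to x2 as t \<rightarrow> +\<infinity> (or vice versa; covered by the symmetric quantification).\<close>
definition finite_connection :: "(real \<Rightarrow> R2 \<Rightarrow> R2) \<Rightarrow> (R2 \<Rightarrow> R2) \<Rightarrow> R2 \<Rightarrow> bool" where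
  "finite_connection phi V x \<longleftrightarrow> \<not> singularity V x \<and>
     (\<exists>x1 x2. singularity V x1 \<and> singularity V x2 \<and>
        ((\<lambda>t. phi t x) \<longlongrightarrow> x1) at_bot \<and> ((\<lambda>t. phi t x) \<longlongrightarrow> x2) at_top)"

end

theory Submission
  imports Defs
begin

lemma flow_pow:
  assumes fl: "is_flow_of phi V"
  shows "(phi c) ^^ n = phi (c * real n)"
proof (induction n)
  case 0
  then show ?case using fl by (auto simp: is_flow_of_def fun_eq_iff)
next
  case (Suc n)
  have "phi (c * real (Suc n)) z = phi c (phi (c * real n) z)" for z
    using fl unfolding is_flow_of_def by (metis add.commute distrib_left mult.right_neutral of_nat_Suc)
  then show ?case using Suc by (auto simp: fun_eq_iff)
qed

lemma flow_zpow:
  assumes fl: "is_flow_of phi V"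
  shows "zpow (phi 1) k = phi (real_of_int k)"
proof -
  have inv: "inv (phi 1) = phi (-1)"
  proof (rule inv_unique_comp)
    show "phi 1 \<circ> phi (- 1) = id" using fl unfolding is_flow_of_def
      by (metis add.right_inverse comp_apply eq_id_iff)
    show "phi (- 1) \<circ> phi 1 = id" using fl unfolding is_flow_of_def
      by (metis add.left_inverse comp_apply eq_id_iff)
  qed
  show ?thesis
  proof (cases "k \<ge> 0")
    case True
    have "real (nat k) = real_of_int k" using True by simp
    moreover have "zpow (phi 1) k = phi 1 ^^ nat k" using True unfolding zpow_def by simp
    ultimately show ?thesis using flow_pow[OF fl, where c=1 and n="nat k"] by simp
  next
    case False
    then show ?thesis using flow_pow[OF fl, where c="-1" and n="nat (-k)"] inv by (simp add: zpow_def of_nat_nat)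
  qed
qed

lemma flow_cont:
  assumes fl: "is_flow_of phi V"
  shows "continuous_on S (\<lambda>t. phi t x)"
proof -
  have "isCont (\<lambda>t. phi t x) t" for t
    using fl unfolding is_flow_of_def by (meson has_vector_derivative_continuous)
  then show ?thesis by (simp add: continuous_at_imp_continuous_on)
qed

lemma core:
  assumes fl: "is_flow_of phi V" and ex: "expansive_fun (phi 1)" and nz: "V x \<noteq> 0"
    and H: "\<And>e. pos_cont e \<Longrightarrow> \<exists>m>0. \<exists>\<delta>>0. (\<forall>t. e (phi t x) \<ge> m) \<and>
              (\<forall>t s. 0 \<le> s \<and> s \<le> \<delta> \<longrightarrow> norm (phi (t+s) x - phi t x) < m)"
  shows False
proof -
  obtain e where e: "pos_cont e" and exp: "\<forall>x y. x \<noteq> y \<longrightarrow>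
     (\<exists>k::int. norm (zpow (phi 1) k x - zpow (phi 1) k y) > e (zpow (phi 1) k x))"
    using ex unfolding expansive_fun_def by blast
  obtain m \<delta> where m: "m > 0" "\<delta> > 0" "\<forall>t. e (phi t x) \<ge> m"
    and d: "\<forall>t s. 0 \<le> s \<and> s \<le> \<delta> \<longrightarrow> norm (phi (t+s) x - phi t x) < m"
    using H[OF e] by blast
  have "\<exists>s. 0 < s \<and> s \<le> \<delta> \<and> phi s x \<noteq> x"
  proof (rule ccontr)
    assume "\<not> ?thesis"
    then have c: "\<And>s. s \<in> cbox 0 \<delta> \<Longrightarrow> phi s x = x" using fl unfolding is_flow_of_def
      by (metis atLeastAtMost_iff cbox_interval order_le_less)
    have "((\<lambda>s. phi s x) has_vector_derivative V (phi 0 x)) (at 0 within cbox 0 \<delta>)"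
      using fl unfolding is_flow_of_def by (meson has_vector_derivative_at_within)
    then have d1: "((\<lambda>s. phi s x) has_vector_derivative V x) (at 0 within cbox 0 \<delta>)"
      using fl unfolding is_flow_of_def by simp
    have d2: "((\<lambda>s. phi s x) has_vector_derivative 0) (at 0 within cbox 0 \<delta>)"
    proof (rule has_vector_derivative_transform_within[of "\<lambda>s. x" 0 0 "cbox 0 \<delta>" 1])
      show "((\<lambda>s. x) has_vector_derivative 0) (at 0 within cbox 0 \<delta>)" by (rule has_vector_derivative_const)
      show "0 < (1::real)" by simp
      show "(0::real) \<in> cbox 0 \<delta>" using m by simp
      show "\<And>x'. x' \<in> cbox 0 \<delta> \<Longrightarrow> dist x' 0 < 1 \<Longrightarrow> x = phi x' x" using c by metis
    qed
    have "V x = 0"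
      using vector_derivative_unique_within_closed_interval[OF m(2) _ d1 d2] m by simp
    then show False using nz by simp
  qed
  then obtain s where s: "0 < s" "s \<le> \<delta>" "phi s x \<noteq> x" by blast
  then obtain k :: int where k: "norm (zpow (phi 1) k x - zpow (phi 1) k (phi s x)) > e (zpow (phi 1) k x)"
    using exp by metis
  have "zpow (phi 1) k (phi s x) = phi (real_of_int k + s) x"
    using fl flow_zpow[OF fl] unfolding is_flow_of_def by metis
  then have "norm (phi k x - phi (k + s) x) > e (phi k x)"
    using k flow_zpow[OF fl] by metis
  moreover have "norm (phi (k + s) x - phi k x) < m" using d s by auto
  ultimately show False using m(3) by (metis norm_minus_commute order.strict_trans order_le_less_trans not_less_iff_gr_or_eq)
qed

lemma periodic_bound:
  assumes fl: "is_flow_of phi V" and T: "T > 0" "phi T x = x" and e: "pos_cont e"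
  shows "\<exists>m>0. \<exists>\<delta>>0. (\<forall>t. e (phi t x) \<ge> m) \<and>
              (\<forall>t s. 0 \<le> s \<and> s \<le> \<delta> \<longrightarrow> norm (phi (t+s) x - phi t x) < m)"
proof -
  define g where "g t = phi t x" for t
  have gc: "continuous_on S g" for S unfolding g_def by (rule flow_cont[OF fl])
  have per: "g (t + T) = g t" for t
    using fl T unfolding g_def is_flow_of_def by metis
  have pern: "g (t + real n * T) = g t" for n t
  proof (induction n arbitrary: t)
    case 0 then show ?case by simp
  next
    case (Suc n)
    have "g (t + real (Suc n) * T) = g ((t + real n * T) + T)" by (simp add: algebra_simps)
    then show ?case using per Suc by simp
  qed
  have perz: "g (t + real_of_int q * T) = g t" for q t
  proof (cases "q \<ge> 0")
    case True
    then show ?thesis using pern[of t "nat q"] by simp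
  next
    case False
    have "g (t + real_of_int q * T) = g ((t + real_of_int q * T) + real (nat (-q)) * T)"
      using pern by simp
    also have "\<dots> = g t" using False by simp
    finally show ?thesis .
  qed
  have red: "\<exists>t0. 0 \<le> t0 \<and> t0 \<le> T \<and> (\<forall>s. g (t + s) = g (t0 + s))" for t
  proof -
    define q where "q = \<lfloor>t / T\<rfloor>"
    define t0 where "t0 = t - real_of_int q * T"
    have "real_of_int q \<le> t / T" "t / T < real_of_int q + 1" unfolding q_def by linarith+
    then have "real_of_int q * T \<le> t" "t < (real_of_int q + 1) * T" using T
      by (simp_all add: pos_le_divide_eq pos_divide_less_eq)
    then have "0 \<le> t0" "t0 \<le> T" unfolding t0_def by (simp_all add: algebra_simps)
    moreover have "g (t + s) = g (t0 + s)" for s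
      using perz[of "t0 + s" q] unfolding t0_def by (simp add: algebra_simps)
    ultimately show ?thesis by blast
  qed
  have ec: "continuous_on UNIV e" "\<And>y. e y > 0" using e unfolding pos_cont_def by auto
  have "continuous_on {0..T} (\<lambda>t. e (g t))"
    by (rule continuous_on_compose2[OF ec(1) gc]) auto
  then obtain tm where tm: "tm \<in> {0..T}" "\<forall>y\<in>{0..T}. e (g tm) \<le> e (g y)"
    using continuous_attains_inf[of "{0..T}" "\<lambda>t. e (g t)"] T by auto
  define m where "m = e (g tm)"
  have m0: "m > 0" unfolding m_def using ec by simp
  have mb: "e (g t) \<ge> m" for t
  proof -
    obtain t0 where "0 \<le> t0" "t0 \<le> T" "\<forall>s. g (t + s) = g (t0 + s)" using red by blast
    then show ?thesis using tm unfolding m_def by (metis add_0_right atLeastAtMost_iff)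
  qed
  have "uniformly_continuous_on {0..2*T} g"
    by (rule compact_uniformly_continuous[OF gc]) simp
  then obtain d where d: "d > 0" "\<forall>a\<in>{0..2*T}. \<forall>b\<in>{0..2*T}. dist b a < d \<longrightarrow> dist (g b) (g a) < m"
    unfolding uniformly_continuous_on_def using m0 by metis
  define \<delta> where "\<delta> = min (d/2) T"
  have "\<delta> > 0" unfolding \<delta>_def using d T by simp
  moreover have "norm (g (t+s) - g t) < m" if "0 \<le> s" "s \<le> \<delta>" for t s
  proof -
    obtain t0 where t0: "0 \<le> t0" "t0 \<le> T" "\<forall>s. g (t + s) = g (t0 + s)" using red by blast
    have "dist (g (t0 + s)) (g t0) < m"
    proof -
      have "s \<le> d/2" "s \<le> T" using that unfolding \<delta>_def by auto
      then have "t0 \<in> {0..2*T}" "t0 + s \<in> {0..2*T}" "dist (t0 + s) t0 < d"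
        using t0 that d T by (auto simp: dist_real_def)
      then show ?thesis using d(2) by blast
    qed
    then show ?thesis using t0(3) by (metis add_0_right dist_norm)
  qed
  ultimately show ?thesis using m0 mb unfolding g_def by blast
qed


lemma conn_bound:
  assumes fl: "is_flow_of phi V" and l1: "((\<lambda>t. phi t x) \<longlongrightarrow> x1) at_bot"
    and l2: "((\<lambda>t. phi t x) \<longlongrightarrow> x2) at_top" and e: "pos_cont e"
  shows "\<exists>m>0. \<exists>\<delta>>0. (\<forall>t. e (phi t x) \<ge> m) \<and>
              (\<forall>t s. 0 \<le> s \<and> s \<le> \<delta> \<longrightarrow> norm (phi (t+s) x - phi t x) < m)"
proof -
  define g where "g t = phi t x" for t
  have gc: "continuous_on S g" for S unfolding g_def by (rule flow_cont[OF fl])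
  have ec: "continuous_on UNIV e" "\<And>y. e y > 0" using e unfolding pos_cont_def by auto
  have ic: "isCont e y" for y using ec(1) by (simp add: continuous_on_eq_continuous_at)
  have g1: "(g \<longlongrightarrow> x1) at_bot" and g2: "(g \<longlongrightarrow> x2) at_top"
    using l1 l2 unfolding g_def by auto
  have "((\<lambda>t. e (g t)) \<longlongrightarrow> e x1) at_bot" by (rule isCont_tendsto_compose[OF ic g1])
  then have "eventually (\<lambda>t. e (g t) > e x1 / 2) at_bot"
    using ec(2)[of x1] by (intro order_tendstoD(1)) auto
  then obtain A1 where A1: "\<forall>t\<le>A1. e (g t) > e x1 / 2" unfolding eventually_at_bot_linorder by blast
  have "((\<lambda>t. e (g t)) \<longlongrightarrow> e x2) at_top" by (rule isCont_tendsto_compose[OF ic g2])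
  then have "eventually (\<lambda>t. e (g t) > e x2 / 2) at_top"
    using ec(2)[of x2] by (intro order_tendstoD(1)) auto
  then obtain A2 where A2: "\<forall>t\<ge>A2. e (g t) > e x2 / 2" unfolding eventually_at_top_linorder by blast
  have "continuous_on {min A1 A2..max A1 A2} (\<lambda>t. e (g t))"
    by (rule continuous_on_compose2[OF ec(1) gc]) auto
  then obtain tm where tm: "tm \<in> {min A1 A2..max A1 A2}" "\<forall>y\<in>{min A1 A2..max A1 A2}. e (g tm) \<le> e (g y)"
    using continuous_attains_inf[of "{min A1 A2..max A1 A2}" "\<lambda>t. e (g t)"] by (metis atLeastAtMost_iff compact_Icc empty_iff max.cobounded1 min.cobounded1 order_trans)
  define m where "m = min (e (g tm)) (min (e x1 / 2) (e x2 / 2))"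
  have m0: "m > 0" unfolding m_def using ec(2) by simp
  have mb: "e (g t) \<ge> m" for t
  proof (cases "t \<le> A1 \<or> t \<ge> A2")
    case True
    then show ?thesis using A1 A2 unfolding m_def by force
  next
    case False
    then have "t \<in> {min A1 A2..max A1 A2}" by auto
    then show ?thesis using tm unfolding m_def by force
  qed
  have "eventually (\<lambda>t. dist (g t) x1 < m/2) at_bot" using tendstoD[OF g1, of "m/2"] m0 by simp
  then obtain B1 where B1: "\<forall>t\<le>B1. dist (g t) x1 < m/2" unfolding eventually_at_bot_linorder by blast
  have "eventually (\<lambda>t. dist (g t) x2 < m/2) at_top" using tendstoD[OF g2, of "m/2"] m0 by simp
  then obtain B2 where B2: "\<forall>t\<ge>B2. dist (g t) x2 < m/2" unfolding eventually_at_top_linorder by blast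
  define L where "L = B1 - 1"
  define U where "U = max B2 L + 1"
  have "uniformly_continuous_on {L..U} g"
    by (rule compact_uniformly_continuous[OF gc]) simp
  then obtain d where d: "d > 0" "\<forall>a\<in>{L..U}. \<forall>b\<in>{L..U}. dist b a < d \<longrightarrow> dist (g b) (g a) < m"
    unfolding uniformly_continuous_on_def using m0 by metis
  define \<delta> where "\<delta> = min (d/2) (1/2)"
  have "\<delta> > 0" unfolding \<delta>_def using d by simp
  moreover have "norm (g (t+s) - g t) < m" if "0 \<le> s" "s \<le> \<delta>" for t s
  proof -
    have s: "s \<le> d/2" "s \<le> 1/2" using that unfolding \<delta>_def by auto
    have "dist (g (t + s)) (g t) < m"
    proof (cases "t \<ge> B2")
      case True
      then have "dist (g (t+s)) x2 < m/2" "dist (g t) x2 < m/2" using B2 that by auto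
      then show ?thesis by (metis dist_commute dist_triangle_half_l)
    next
      case F1: False
      show ?thesis
      proof (cases "t \<le> L")
        case True
        then have "dist (g (t+s)) x1 < m/2" "dist (g t) x1 < m/2" using B1 s unfolding L_def by auto
        then show ?thesis by (metis dist_commute dist_triangle_half_l)
      next
        case False
        then have "t \<in> {L..U}" "t + s \<in> {L..U}" "dist (t + s) t < d"
          using F1 s that d unfolding U_def by (auto simp: dist_real_def)
        then show ?thesis using d(2) by blast
      qed
    qed
    then show ?thesis by (simp add: dist_norm)
  qed
  ultimately show ?thesis using m0 mb unfolding g_def by blast
qed

theorem mainTheorem16:
  fixes f :: "R2 \<Rightarrow> R2" and phi :: "real \<Rightarrow> R2 \<Rightarrow> R2" and V :: "R2 \<Rightarrow> R2"
  assumes "C1_field V"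
    and "is_flow_of phi V"
    and "f = phi 1"
    and "topologically_anosov f"
  shows "(\<nexists>x. periodic_orbit phi V x) \<and> (\<nexists>x. finite_connection phi V x)"
proof -
  have ex: "expansive_fun (phi 1)" using assms(3,4) unfolding topologically_anosov_def by simp
  have A: False if P: "periodic_orbit phi V x" for x
  proof -
    obtain T where T: "T > 0" "phi T x = x" and nz: "V x \<noteq> 0"
      using P unfolding periodic_orbit_def singularity_def by auto
    show False
      by (rule core[OF assms(2) ex nz periodic_bound[OF assms(2) T]])
  qed
  have B: False if P: "finite_connection phi V x" for x
  proof -
    obtain x1 x2 where l: "((\<lambda>t. phi t x) \<longlongrightarrow> x1) at_bot" "((\<lambda>t. phi t x) \<longlongrightarrow> x2) at_top"
      and nz: "V x \<noteq> 0"
      using P unfolding finite_connection_def singularity_def by blast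
    show False
      by (rule core[OF assms(2) ex nz conn_bound[OF assms(2) l]])
  qed
  show ?thesis using A B by blast
qed

end
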